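(* For each integer $n \geq 3$ there is a hierarchical model (simplicial complex) $\Delta_n$ on $n$ binary random variables such that $$gap_-(\Delta_n) \geq 2^{n-3} - 1.$$
   Context: A hierarchical model on $n$ binary random variables is a simplicial complex $\Delta$ on the ground set $[n]=\{1,\dots,n\}$ (a collection of subsets of $[n]$ closed under taking subsets). A contingency table is a vector $\mathbf{u}=(u_{\mathbf{i}})_{\mathbf{i}\in\{0,1\}^n}$ of nonnegative entries indexed by $\{0,1\}^n$. For $F\in\Delta$, the $F$-margin of $\mathbf{u}$ is the vector indexed by $\mathbf{j}\in\{0,1\}^F$ whose $\mathbf{j}$-entry is $\sum_{\mathbf{i}:\ \mathbf{i}_F=\mathbf{j}} u_{\mathbf{i}}$, where $\mathbf{i}_F$ is the restriction of $\mathbf{i}$ to the coordinates in $F$. Let $A_\Delta$ be the matrix of the linear map sending $\mathbf{u}$ to the tuple of all its $F$-margins, $F\in\Delta$. Write $u_{\mathbf{0}}$ for the cell entry indexed by $(0,0,\dots,0)$. For a margin vector $\mathbf{b}$, the integer program $IP_\Delta(\mathbf{b})$ is: minimize $u_{\mathbf{0}}$ subject to $A_\Delta\mathbf{u}=\mathbf{b}$, $\mathbf{u}\ge 0$, $\mathbf{u}$ integral; the linear programming relaxation $LP_\Delta(\mathbf{b})$ is the same problem without the integrality condition. The integer programming gap $gap_-(\Delta)$ is the supremum, over all feasible margin vectors $\mathbf{b}$ (i.e. $\mathbf{b}=A_\Delta\mathbf{u}$ for some nonnegative integer table $\mathbf{u}$), of the difference between the optimal value of $IP_\Delta(\mathbf{b})$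 and the optimal value of $LP_\Delta(\mathbf{b})$. *)

theory Defs
  imports "HOL-Library.FuncSet" "HOL-Library.Extended_Real" Complex_Main
begin

definition cells :: "nat set \<Rightarrow> (nat \<Rightarrow> nat) set" where
  "cells F = (F \<rightarrow>\<^sub>E {0, 1})"

definition simplicial_complex :: "nat \<Rightarrow> nat set set \<Rightarrow> bool" where
  "simplicial_complex n \<Delta> \<longleftrightarrow>
     (\<forall>F\<in>\<Delta>. F \<subseteq> {1..n}) \<and> (\<forall>F\<in>\<Delta>. \<forall>G. G \<subseteq> F \<longrightarrow> G \<in> \<Delta>)"

definition zero_cell :: "nat \<Rightarrow> nat \<Rightarrow> nat" where
  "zero_cell n = (\<lambda>k\<in>{1..n}. 0)"

definition margin :: "nat \<Rightarrow> ((nat \<Rightarrow> nat) \<Rightarrow> real) \<Rightarrow> nat set \<Rightarrow> (nat \<Rightarrow> nat) \<Rightarrow> real" where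
  "margin n u F j = (\<Sum>i\<in>{i\<in>cells {1..n}. restrict i F = j}. u i)"

definition marginals :: "nat \<Rightarrow> nat set set \<Rightarrow> ((nat \<Rightarrow> nat) \<Rightarrow> real)
                         \<Rightarrow> nat set \<Rightarrow> (nat \<Rightarrow> nat) \<Rightarrow> real" where
  "marginals n \<Delta> u = (\<lambda>F j. if F \<in> \<Delta> \<and> j \<in> cells F then margin n u F j else 0)"

definition nonneg_table :: "nat \<Rightarrow> ((nat \<Rightarrow> nat) \<Rightarrow> real) \<Rightarrow> bool" where
  "nonneg_table n u \<longleftrightarrow> (\<forall>i\<in>cells {1..n}. u i \<ge> 0)"

definition integral_table :: "nat \<Rightarrow> ((nat \<Rightarrow> nat) \<Rightarrow> real) \<Rightarrow> bool" where
  "integral_table n u \<longleftrightarrow> (\<forall>i\<in>cells {1..n}. u i \<in> \<int>)"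

definition feasible_margins :: "nat \<Rightarrow> nat set set \<Rightarrow> (nat set \<Rightarrow> (nat \<Rightarrow> nat) \<Rightarrow> real) set" where
  "feasible_margins n \<Delta> =
     {marginals n \<Delta> u | u. nonneg_table n u \<and> integral_table n u}"

definition IP_opt :: "nat \<Rightarrow> nat set set \<Rightarrow> (nat set \<Rightarrow> (nat \<Rightarrow> nat) \<Rightarrow> real) \<Rightarrow> real" where
  "IP_opt n \<Delta> b = Inf {u (zero_cell n) | u.
      marginals n \<Delta> u = b \<and> nonneg_table n u \<and> integral_table n u}"

definition LP_opt :: "nat \<Rightarrow> nat set set \<Rightarrow> (nat set \<Rightarrow> (nat \<Rightarrow> nat) \<Rightarrow> real) \<Rightarrow> real" where
  "LP_opt n \<Delta> b = Inf {u (zero_cell n) | u.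
      marginals n \<Delta> u = b \<and> nonneg_table n u}"

definition gap_minus :: "nat \<Rightarrow> nat set set \<Rightarrow> ereal" where
  "gap_minus n \<Delta> = (SUP b\<in>feasible_margins n \<Delta>. ereal (IP_opt n \<Delta> b - LP_opt n \<Delta> b))"

end

theory Submission
  imports Defs
begin


definition sg :: "(nat \<Rightarrow> nat) \<Rightarrow> nat \<Rightarrow> real" where
  "sg i c = (if i c = 0 then 1 else -1)"

definition chi :: "nat set \<Rightarrow> (nat \<Rightarrow> nat) \<Rightarrow> real" where
  "chi S i = (\<Prod>c\<in>S. sg i c)"

definition flip :: "nat \<Rightarrow> (nat \<Rightarrow> nat) \<Rightarrow> (nat \<Rightarrow> nat)" where
  "flip c i = i(c := 1 - i c)"

lemma cells_val: "i \<in> cells {1..n} \<Longrightarrow> c \<in> {1..n} \<Longrightarrow> i c = 0 \<or> i c = 1"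
  unfolding cells_def by (drule PiE_mem) auto

lemma flip_cells: "i \<in> cells {1..n} \<Longrightarrow> c \<in> {1..n} \<Longrightarrow> flip c i \<in> cells {1..n}"
proof -
  assume i: "i \<in> cells {1..n}" and c: "c \<in> {1..n}"
  have y: "1 - i c \<in> {0,1::nat}" by auto
  have "i(c := 1 - i c) \<in> Pi\<^sub>E (insert c {1..n}) (\<lambda>_. {0,1})"
    by (rule PiE_fun_upd[where T="\<lambda>_. {0,1}", OF y]) (use i in \<open>simp add: cells_def\<close>)
  thus ?thesis using c by (simp add: cells_def flip_def insert_absorb)
qed

lemma flip_flip: "i \<in> cells {1..n} \<Longrightarrow> c \<in> {1..n} \<Longrightarrow> flip c (flip c i) = i"
  using cells_val[of i n c] by (auto simp: flip_def)

lemma restrict_flip: "c \<notin> F \<Longrightarrow> restrict (flip c i) F = restrict i F"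
  by (auto simp: flip_def restrict_def)

lemma margin_flip_zero:
  assumes c: "c \<in> {1..n}" "c \<notin> F"
    and anti: "\<And>i. i \<in> cells {1..n} \<Longrightarrow> f (flip c i) = - f i"
  shows "margin n f F j = 0"
proof -
  let ?A = "{i\<in>cells {1..n}. restrict i F = j}"
  have "sum f ?A = sum (\<lambda>i. - f i) ?A"
    apply (rule sum.reindex_bij_witness[where i="flip c" and j="flip c"])
    using flip_flip[OF _ c(1)] flip_cells[OF _ c(1)] restrict_flip[OF c(2)] anti by auto
  hence "sum f ?A = 0" by (simp add: sum_negf)
  thus ?thesis by (simp add: margin_def)
qed

lemma sg_flip_same: "c' \<noteq> c \<Longrightarrow> sg (flip c i) c' = sg i c'"
  by (simp add: sg_def flip_def)

lemma sg_flip: "i \<in> cells {1..n} \<Longrightarrow> c \<in> {1..n} \<Longrightarrow> sg (flip c i) c = - sg i c"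
  using cells_val[of i n c] by (auto simp: sg_def flip_def)

lemma chi_flip:
  assumes "i \<in> cells {1..n}" "c \<in> {1..n}" "c \<in> S" "finite S"
  shows "chi S (flip c i) = - chi S i"
proof -
  have "chi S (flip c i) = sg (flip c i) c * (\<Prod>c'\<in>S - {c}. sg (flip c i) c')"
    unfolding chi_def using assms by (simp add: prod.remove)
  also have "(\<Prod>c'\<in>S - {c}. sg (flip c i) c') = (\<Prod>c'\<in>S - {c}. sg i c')"
    by (rule prod.cong) (auto simp: sg_flip_same)
  also have "sg (flip c i) c = - sg i c" using assms sg_flip by blast
  finally show ?thesis unfolding chi_def using assms by (simp add: prod.remove)
qed

lemma margin_chi_zero:
  assumes "c \<in> {1..n}" "c \<notin> F" "c \<in> S" "finite S"
  shows "margin n (chi S) F j = 0"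
  by (rule margin_flip_zero[OF assms(1,2)]) (use assms chi_flip in blast)

lemma chi_pm: "finite S \<Longrightarrow> chi S i = 1 \<or> chi S i = -1"
  unfolding chi_def by (induction S rule: finite_induct) (auto simp: sg_def)

lemma sum_chi: "finite X \<Longrightarrow> (\<Sum>T\<in>Pow X. chi T i) = (if \<forall>c\<in>X. i c = 0 then 2 ^ card X else 0)"
proof -
  assume fX: "finite X"
  have "(\<Prod>c\<in>X. sg i c + 1) = (\<Sum>T\<in>Pow X. (\<Prod>c\<in>T. sg i c) * (\<Prod>c\<in>X - T. 1))"
    by (rule prod_add[OF fX])
  hence e: "(\<Sum>T\<in>Pow X. chi T i) = (\<Prod>c\<in>X. sg i c + 1)" by (simp add: chi_def)
  show ?thesis
  proof (cases "\<forall>c\<in>X. i c = 0")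
    case True
    hence "(\<Prod>c\<in>X. sg i c + 1) = (\<Prod>c\<in>X. 2)" by (intro prod.cong) (auto simp: sg_def)
    thus ?thesis using e True by simp
  next
    case False
    then obtain c where "c \<in> X" "i c \<noteq> 0" by auto
    hence "(\<Prod>c\<in>X. sg i c + 1) = 0" using fX by (subst prod_zero_iff) (auto simp: sg_def intro!: bexI[of _ c])
    thus ?thesis using e False by simp
  qed
qed

lemma fiber_sum:
  assumes "F \<subseteq> {1..n}"
  shows "(\<Sum>i\<in>cells {1..n}. g (restrict i F) * w i) = (\<Sum>j\<in>cells F. g j * margin n w F j)"
proof -
  have fin: "finite (cells A)" if "finite A" for A :: "nat set"
    unfolding cells_def by (rule finite_PiE) (use that in auto)
  have fF: "finite F" using assms finite_subset by blast
  have img: "(\<lambda>i. restrict i F) ` cells {1..n} \<subseteq> cells F"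
  proof
    fix x assume "x \<in> (\<lambda>i. restrict i F) ` cells {1..n}"
    then obtain i where i: "i \<in> cells {1..n}" "x = restrict i F" by blast
    have "\<forall>c\<in>F. i c \<in> {0,1}" using i(1) assms unfolding cells_def by (blast dest: PiE_mem)
    thus "x \<in> cells F" unfolding cells_def i(2) restrict_PiE_iff .
  qed
  have "(\<Sum>j\<in>cells F. g j * margin n w F j)
      = (\<Sum>j\<in>cells F. \<Sum>i\<in>{i. i \<in> cells {1..n} \<and> restrict i F = j}. g (restrict i F) * w i)"
    unfolding margin_def by (intro sum.cong refl) (auto simp: sum_distrib_left)
  also have "\<dots> = (\<Sum>i\<in>cells {1..n}. g (restrict i F) * w i)"
    by (rule sum.group[OF fin[of "{1..n}"] fin[OF fF] img]) simp
  finally show ?thesis by simp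
qed



definition Dn :: "nat \<Rightarrow> nat set set" where
  "Dn n = {S. S \<subseteq> {1..n} \<and> (1 \<notin> S \<or> S \<subseteq> {1,2} \<or> (2 \<notin> S \<and> \<not> {3..n} \<subseteq> S))}"

lemma Dn_sc: "simplicial_complex n (Dn n)"
  unfolding simplicial_complex_def Dn_def by blast

definition zt :: "nat \<Rightarrow> (nat \<Rightarrow> nat) \<Rightarrow> real" where
  "zt n i = (chi (insert 1 {3..n}) i + (\<Sum>T\<in>Pow {3..n} - {{}}. chi ({1,2} \<union> T) i)) / 2"

lemma margin_lin:
  "margin n (\<lambda>i. (a i + (\<Sum>T\<in>A. b T i)) / 2) F j = (margin n a F j + (\<Sum>T\<in>A. margin n (b T) F j)) / 2"
  unfolding margin_def by (simp add: sum_divide_distrib[symmetric] sum.distrib sum.swap[of _ A])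

lemma margin_zt:
  assumes n: "n \<ge> 3" and F: "F \<in> Dn n"
  shows "margin n (zt n) F j = 0"
proof -
  have F': "F \<subseteq> {1..n}" "1 \<notin> F \<or> F \<subseteq> {1,2} \<or> (2 \<notin> F \<and> \<not> {3..n} \<subseteq> F)"
    using F by (auto simp: Dn_def)
  have A: "margin n (chi (insert 1 {3..n})) F j = 0"
  proof -
    have "\<exists>c. c \<in> {1..n} \<and> c \<notin> F \<and> c \<in> insert 1 {3..n}"
    proof (cases "1 \<notin> F")
      case True thus ?thesis using n by (intro exI[of _ 1]) auto
    next
      case False
      show ?thesis
      proof (cases "F \<subseteq> {1,2}")
        case True thus ?thesis using n by (intro exI[of _ 3]) auto
      next
        case False
        hence "\<not> {3..n} \<subseteq> F" using F'(2) \<open>\<not> 1 \<notin> F\<close> by blast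
        then obtain c where "c \<in> {3..n}" "c \<notin> F" by blast
        thus ?thesis by (intro exI[of _ c]) auto
      qed
    qed
    then obtain c where "c \<in> {1..n}" "c \<notin> F" "c \<in> insert 1 {3..n}" by blast
    thus ?thesis by (intro margin_chi_zero) auto
  qed
  have B: "margin n (chi ({1,2} \<union> T)) F j = 0" if T: "T \<in> Pow {3..n} - {{}}" for T
  proof -
    have "\<exists>c. c \<in> {1..n} \<and> c \<notin> F \<and> c \<in> {1,2} \<union> T"
    proof (cases "1 \<notin> F")
      case True thus ?thesis using n by (intro exI[of _ 1]) auto
    next
      case False
      show ?thesis
      proof (cases "F \<subseteq> {1,2}")
        case True
        from T obtain c where c: "c \<in> T" by blast
        have c3: "3 \<le> c" "c \<le> n" using T c by auto
        have "c \<notin> F" using True c3 by auto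
        thus ?thesis using c c3 by (intro exI[of _ c]) auto
      next
        case False
        hence "2 \<notin> F" using F'(2) \<open>\<not> 1 \<notin> F\<close> by blast
        thus ?thesis using n by (intro exI[of _ 2]) auto
      qed
    qed
    then obtain c where "c \<in> {1..n}" "c \<notin> F" "c \<in> {1,2} \<union> T" by blast
    moreover have "finite ({1,2} \<union> T)" using T finite_subset by auto
    ultimately show ?thesis by (intro margin_chi_zero) auto
  qed
  have "margin n (zt n) F j = (margin n (chi (insert 1 {3..n})) F j +
      (\<Sum>T\<in>Pow {3..n} - {{}}. margin n (chi ({1,2} \<union> T)) F j)) / 2"
    unfolding zt_def[abs_def] by (rule margin_lin)
  also have "\<dots> = 0" using A B by simp
  finally show ?thesis .
qed

definition R :: "nat \<Rightarrow> real" where "R n = 2 ^ (n - 3)"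
definition d0 :: "nat \<Rightarrow> (nat \<Rightarrow> nat) \<Rightarrow> bool" where "d0 n i = (\<forall>c\<in>{3..n}. i c = 0)"
definition supp :: "nat \<Rightarrow> (nat \<Rightarrow> nat) \<Rightarrow> bool" where
  "supp n i = (d0 n i \<or> chi {3..n} i \<noteq> sg i 2)"
definition ut :: "nat \<Rightarrow> (nat \<Rightarrow> nat) \<Rightarrow> real" where
  "ut n i = (if i = zero_cell n then R n - 1 else if supp n i then R n else 0)"
definition vt :: "nat \<Rightarrow> (nat \<Rightarrow> nat) \<Rightarrow> real" where
  "vt n i = ut n i - (R n - 1) / R n * zt n i"

lemma R_ge1: "R n \<ge> 1" unfolding R_def by simp

lemma card_X: "n \<ge> 3 \<Longrightarrow> (2::real) ^ card {3..n} = 2 * R n"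
proof -
  assume "n \<ge> 3"
  hence "card {3..n} = Suc (n - 3)" by simp
  thus ?thesis by (simp add: R_def)
qed

lemma sg_pm: "sg i c = 1 \<or> sg i c = -1" by (simp add: sg_def)

lemma sum_chi_X: "n \<ge> 3 \<Longrightarrow> (\<Sum>T\<in>Pow {3..n}. chi T i) = (if d0 n i then 2 * R n else 0)"
  using sum_chi[of "{3..n}" i] card_X[of n] by (simp add: d0_def)

lemma sum_chi_ne: "n \<ge> 3 \<Longrightarrow> (\<Sum>T\<in>Pow {3..n} - {{}}. chi T i) = (if d0 n i then 2 * R n else 0) - 1"
proof -
  assume n: "n \<ge> 3"
  have "(\<Sum>T\<in>Pow {3..n} - {{}}. chi T i) = (\<Sum>T\<in>Pow {3..n}. chi T i) - chi {} i"
    by (simp add: sum_diff1)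
  thus ?thesis using sum_chi_X[OF n, of i] by (simp add: chi_def)
qed

lemma sum_chi_ne2: "n \<ge> 3 \<Longrightarrow>
   (\<Sum>T\<in>Pow {3..n} - {{}, {3..n}}. chi T i) = (if d0 n i then 2 * R n else 0) - 1 - chi {3..n} i"
proof -
  assume n: "n \<ge> 3"
  have ne: "{3..n} \<noteq> {}" using n by auto
  have "(\<Sum>T\<in>Pow {3..n} - {{}, {3..n}}. chi T i) = (\<Sum>T\<in>Pow {3..n}. chi T i) - (\<Sum>T\<in>{{}, {3..n}}. chi T i)"
    by (rule sum_diff) auto
  also have "(\<Sum>T\<in>{{}, {3..n}}. chi T i) = 1 + chi {3..n} i"
    using ne by (simp add: chi_def)
  finally show ?thesis using sum_chi_X[OF n, of i] by simp
qed

lemma zt_closed: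
  assumes n: "n \<ge> 3"
  shows "zt n i = sg i 1 * (chi {3..n} i + sg i 2 * ((if d0 n i then 2 * R n else 0) - 1)) / 2"
proof -
  have a: "chi (insert 1 {3..n}) i = sg i 1 * chi {3..n} i"
    by (simp add: chi_def)
  have b: "chi ({1,2} \<union> T) i = sg i 1 * sg i 2 * chi T i" if "T \<in> Pow {3..n} - {{}}" for T
  proof -
    have "finite T" "1 \<notin> T" "2 \<notin> T" using that finite_subset by auto
    thus ?thesis by (simp add: chi_def)
  qed
  have "(\<Sum>T\<in>Pow {3..n} - {{}}. chi ({1,2} \<union> T) i) = sg i 1 * sg i 2 * (\<Sum>T\<in>Pow {3..n} - {{}}. chi T i)"
  proof -
    have "(\<Sum>T\<in>Pow {3..n} - {{}}. chi ({1,2} \<union> T) i) = (\<Sum>T\<in>Pow {3..n} - {{}}. sg i 1 * sg i 2 * chi T i)"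
      by (intro sum.cong refl) (rule b)
    thus ?thesis by (simp add: sum_distrib_left)
  qed
  also have "\<dots> = sg i 1 * sg i 2 * ((if d0 n i then 2 * R n else 0) - 1)"
    using sum_chi_ne[OF n, of i] by simp
  finally have e2: "(\<Sum>T\<in>Pow {3..n} - {{}}. chi ({1,2} \<union> T) i) = sg i 1 * sg i 2 * ((if d0 n i then 2 * R n else 0) - 1)" .
  show ?thesis unfolding zt_def a e2 by (simp add: algebra_simps)
qed



definition zc1 :: "nat \<Rightarrow> nat \<Rightarrow> nat" where "zc1 n = (zero_cell n)(2 := 1)"

lemma zc_cells: "zero_cell n \<in> cells {1..n}"
  by (simp add: zero_cell_def cells_def)

lemma zc1_cells: assumes "n \<ge> 3" shows "zc1 n \<in> cells {1..n}"
proof -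
  have y: "(1::nat) \<in> {0,1}" by simp
  have "(zero_cell n)(2 := 1) \<in> Pi\<^sub>E (insert 2 {1..n}) (\<lambda>_. {0,1})"
    by (rule PiE_fun_upd[where T="\<lambda>_. {0,1}", OF y]) (use zc_cells in \<open>simp add: cells_def\<close>)
  thus ?thesis using assms by (simp add: cells_def zc1_def insert_absorb)
qed

lemma zc_val: "c \<in> {1..n} \<Longrightarrow> zero_cell n c = 0" by (simp add: zero_cell_def)

lemma zc_ne: assumes "n \<ge> 3" shows "zero_cell n \<noteq> zc1 n"
proof
  assume "zero_cell n = zc1 n"
  hence "zero_cell n 2 = zc1 n 2" by simp
  moreover have "zero_cell n 2 = 0" using assms by (intro zc_val) auto
  ultimately show False by (simp add: zc1_def)
qed

lemma chi_d0: "d0 n i \<Longrightarrow> chi {3..n} i = 1"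
  unfolding chi_def d0_def sg_def by (intro prod.neutral) auto

lemma d0_zc: "d0 n (zero_cell n)" by (simp add: d0_def zero_cell_def)
lemma d0_zc1: "d0 n (zc1 n)" by (simp add: d0_def zero_cell_def zc1_def)
lemma supp_zc: "supp n (zero_cell n)" by (simp add: supp_def d0_zc)
lemma supp_zc1: "supp n (zc1 n)" by (simp add: supp_def d0_zc1)

lemma zt_zc: assumes n: "n \<ge> 3" shows "zt n (zero_cell n) = R n"
proof -
  have "sg (zero_cell n) 1 = 1" "sg (zero_cell n) 2 = 1" using n by (auto simp: sg_def zero_cell_def)
  thus ?thesis using zt_closed[OF n, of "zero_cell n"] chi_d0[OF d0_zc[of n]] d0_zc[of n] by simp
qed

lemma R_pos: "R n > 0" using R_ge1[of n] by simp

lemma vt_zc: assumes n: "n \<ge> 3" shows "vt n (zero_cell n) = 0"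
  using zt_zc[OF n] R_pos[of n] by (simp add: vt_def ut_def)

lemma zt_le: assumes n: "n \<ge> 3" shows "zt n i \<le> R n"
proof -
  have r: "R n \<ge> 1" by (rule R_ge1)
  have f: "finite {3..n}" by simp
  show ?thesis
    unfolding zt_closed[OF n]
    using sg_pm[of i 1] sg_pm[of i 2] chi_pm[OF f, of i] r by (cases "d0 n i") auto
qed

lemma zt_nsupp: assumes n: "n \<ge> 3" and s: "\<not> supp n i" shows "zt n i = 0"
  using s unfolding supp_def zt_closed[OF n] by simp

lemma R_int: "R n = of_int (2 ^ (n - 3))" by (simp add: R_def)

lemma ut_nonneg: "nonneg_table n (ut n)"
  using R_ge1[of n] by (auto simp: nonneg_table_def ut_def)

lemma ut_integral: "integral_table n (ut n)"
  unfolding integral_table_def ut_def R_int by auto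

lemma vt_nonneg: assumes n: "n \<ge> 3" shows "nonneg_table n (vt n)"
  unfolding nonneg_table_def
proof
  fix i assume i: "i \<in> cells {1..n}"
  show "vt n i \<ge> 0"
  proof (cases "i = zero_cell n")
    case True thus ?thesis using vt_zc[OF n] by simp
  next
    case False
    show ?thesis
    proof (cases "supp n i")
      case True
      have c: "0 \<le> (R n - 1) / R n" using R_ge1[of n] by simp
      have "(R n - 1) / R n * zt n i \<le> (R n - 1) / R n * R n"
        by (rule mult_left_mono[OF zt_le[OF n] c])
      also have "\<dots> = R n - 1" using R_pos[of n] by simp
      finally show ?thesis using False True by (simp add: vt_def ut_def)
    next
      case False
      thus ?thesis using zt_nsupp[OF n False] \<open>i \<noteq> zero_cell n\<close> by (simp add: vt_def ut_def)
    qed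
  qed
qed

lemma marg_eq: assumes n: "n \<ge> 3" shows "marginals n (Dn n) (vt n) = marginals n (Dn n) (ut n)"
proof (intro ext)
  fix F j
  show "marginals n (Dn n) (vt n) F j = marginals n (Dn n) (ut n) F j"
  proof (cases "F \<in> Dn n \<and> j \<in> cells F")
    case True
    have "margin n (vt n) F j = margin n (ut n) F j - (R n - 1) / R n * margin n (zt n) F j"
      by (simp add: margin_def vt_def sum_subtractf sum_distrib_left)
    thus ?thesis using True margin_zt[OF n, of F j] by (simp add: marginals_def)
  next
    case False
    show ?thesis unfolding marginals_def if_not_P[OF False] ..
  qed
qed



lemma inv_sum:
  assumes F: "F \<in> Dn n" and eq: "marginals n (Dn n) w = marginals n (Dn n) (ut n)"
  shows "(\<Sum>i\<in>cells {1..n}. g (restrict i F) * w i) = (\<Sum>i\<in>cells {1..n}. g (restrict i F) * ut n i)"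
proof -
  have Fs: "F \<subseteq> {1..n}" using F by (simp add: Dn_def)
  have m: "margin n w F j = margin n (ut n) F j" if "j \<in> cells F" for j
    using fun_cong[OF fun_cong[OF eq, of F], of j] F that by (simp add: marginals_def)
  show ?thesis unfolding fiber_sum[OF Fs] by (intro sum.cong refl) (simp add: m)
qed

lemma supp_restrict:
  assumes n: "n \<ge> 3" shows "supp n (restrict i {2..n}) = supp n i"
proof -
  have a: "chi {3..n} (restrict i {2..n}) = chi {3..n} i"
    unfolding chi_def sg_def by (intro prod.cong) auto
  have b: "sg (restrict i {2..n}) 2 = sg i 2" using n by (simp add: sg_def)
  have c: "d0 n (restrict i {2..n}) = d0 n i" by (auto simp: d0_def)
  show ?thesis unfolding supp_def a b c ..
qed

lemma w_off:
  assumes n: "n \<ge> 3" and nn: "nonneg_table n w"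
    and eq: "marginals n (Dn n) w = marginals n (Dn n) (ut n)"
  shows "\<forall>i\<in>cells {1..n}. \<not> supp n i \<longrightarrow> w i = 0"
proof -
  let ?g = "\<lambda>j. if supp n j then 0 else (1::real)"
  have L: "{2..n} \<in> Dn n" by (auto simp: Dn_def)
  have "(\<Sum>i\<in>cells {1..n}. ?g (restrict i {2..n}) * w i) = (\<Sum>i\<in>cells {1..n}. ?g (restrict i {2..n}) * ut n i)"
    by (rule inv_sum[OF L eq])
  also have "\<dots> = 0"
    by (intro sum.neutral) (auto simp: supp_restrict[OF n] ut_def supp_zc)
  finally have s: "(\<Sum>i\<in>cells {1..n}. ?g (restrict i {2..n}) * w i) = 0" .
  have fin: "finite (cells {1..n})" unfolding cells_def by (intro finite_PiE) auto
  have "\<forall>i\<in>cells {1..n}. ?g (restrict i {2..n}) * w i = 0"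
    using s nn unfolding nonneg_table_def by (subst (asm) sum_nonneg_eq_0_iff[OF fin]) auto
  thus ?thesis by (auto simp: supp_restrict[OF n])
qed

definition TT :: "nat \<Rightarrow> nat set set" where "TT n = Pow {3..n} - {{}, {3..n}}"

definition phi :: "nat \<Rightarrow> (nat \<Rightarrow> nat) \<Rightarrow> real" where
  "phi n i = (if i 1 = 0 then (\<Sum>T\<in>TT n. chi T i) / 2 + (if i 2 = 1 then 1 else 0) else 0)"

lemma phi_split:
  "(\<Sum>i\<in>C. phi n i * w i) =
   (\<Sum>T\<in>TT n. \<Sum>i\<in>C. (if i 1 = 0 then chi T i else 0) * w i) / 2 +
   (\<Sum>i\<in>C. (if i 1 = 0 \<and> i 2 = 1 then 1 else 0) * w i)"
proof -
  have pw: "phi n i * w i = (\<Sum>T\<in>TT n. (if i 1 = 0 then chi T i else 0) * w i) / 2 +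
      (if i 1 = 0 \<and> i 2 = 1 then 1 else 0) * w i" for i
  proof (cases "i 1 = 0")
    case True
    have "(\<Sum>T\<in>TT n. (if i 1 = 0 then chi T i else 0) * w i) = (\<Sum>T\<in>TT n. chi T i) * w i"
      using True by (simp add: sum_distrib_right)
    thus ?thesis using True by (simp add: phi_def distrib_right)
  next
    case False thus ?thesis by (simp add: phi_def)
  qed
  show ?thesis
    unfolding pw sum.distrib sum_divide_distrib[symmetric] by (subst sum.swap) simp
qed

lemma TT_Dn: assumes n: "n \<ge> 3" and T: "T \<in> TT n" shows "insert 1 T \<in> Dn n"
proof -
  have T': "T \<subseteq> {3..n}" "T \<noteq> {3..n}" using T by (auto simp: TT_def)
  then obtain c where "c \<in> {3..n}" "c \<notin> T" by blast
  hence "\<not> {3..n} \<subseteq> insert 1 T" by auto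
  moreover have "2 \<notin> insert 1 T" using T' by auto
  moreover have "insert 1 T \<subseteq> {1..n}" using T' n by auto
  ultimately show ?thesis by (simp add: Dn_def)
qed

lemma phi_inv:
  assumes n: "n \<ge> 3" and eq: "marginals n (Dn n) w = marginals n (Dn n) (ut n)"
  shows "(\<Sum>i\<in>cells {1..n}. phi n i * w i) = (\<Sum>i\<in>cells {1..n}. phi n i * ut n i)"
proof -
  have A: "(\<Sum>i\<in>cells {1..n}. (if i 1 = 0 then chi T i else 0) * w i) =
           (\<Sum>i\<in>cells {1..n}. (if i 1 = 0 then chi T i else 0) * ut n i)" if T: "T \<in> TT n" for T
  proof -
    let ?g = "\<lambda>j. if j 1 = 0 then chi T j else (0::real)"
    have r: "?g (restrict i (insert 1 T)) = (if i 1 = 0 then chi T i else 0)" for i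
    proof -
      have "chi T (restrict i (insert 1 T)) = chi T i" unfolding chi_def sg_def by (intro prod.cong) auto
      thus ?thesis by simp
    qed
    show ?thesis using inv_sum[OF TT_Dn[OF n T] eq, of ?g] unfolding r .
  qed
  have B: "(\<Sum>i\<in>cells {1..n}. (if i 1 = 0 \<and> i 2 = 1 then 1 else 0) * w i) =
           (\<Sum>i\<in>cells {1..n}. (if i 1 = 0 \<and> i 2 = 1 then 1 else 0) * ut n i)"
  proof -
    let ?g = "\<lambda>j. if j 1 = 0 \<and> j 2 = 1 then 1 else (0::real)"
    have F: "{1,2} \<in> Dn n" using n by (auto simp: Dn_def)
    have r: "?g (restrict i {1,2}) = (if i 1 = 0 \<and> i 2 = 1 then 1 else 0)" for i by simp
    show ?thesis using inv_sum[OF F eq, of ?g] unfolding r .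
  qed
  show ?thesis unfolding phi_split using A B by simp
qed

lemma cell_id:
  assumes n: "n \<ge> 3" and i: "i \<in> cells {1..n}" and i1: "i 1 = 0" and d: "d0 n i"
  shows "(i 2 = 0 \<longrightarrow> i = zero_cell n) \<and> (i 2 = 1 \<longrightarrow> i = zc1 n)"
proof -
  have ext_i: "i k = undefined" if "k \<notin> {1..n}" for k
    by (rule PiE_arb[OF i[unfolded cells_def] that])
  have v: "i k = 0" if "k \<in> {3..n}" for k using d that by (simp add: d0_def)
  have A: "i = zero_cell n" if "i 2 = 0"
  proof
    fix k show "i k = zero_cell n k"
    proof (cases "k \<in> {1..n}")
      case True
      have z: "zero_cell n k = 0" using True by (rule zc_val)
      have "k = 1 \<or> k = 2 \<or> k \<in> {3..n}" using True by auto
      hence "i k = 0"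
      proof (elim disjE)
        assume "k = 1" thus ?thesis using i1 by simp
      next
        assume "k = 2" thus ?thesis using that by simp
      next
        assume "k \<in> {3..n}" thus ?thesis by (rule v)
      qed
      thus ?thesis using z by simp
    next
      case False
      have "zero_cell n k = undefined" unfolding zero_cell_def restrict_apply if_not_P[OF False] ..
      thus ?thesis using ext_i[OF False] by simp
    qed
  qed
  have B: "i = zc1 n" if "i 2 = 1"
  proof
    fix k show "i k = zc1 n k"
    proof (cases "k \<in> {1..n}")
      case True
      have z: "zero_cell n k = 0" using True by (rule zc_val)
      have "k = 1 \<or> k = 2 \<or> k \<in> {3..n}" using True by auto
      thus ?thesis
      proof (elim disjE)
        assume "k = 1" thus ?thesis using i1 z by (simp add: zc1_def)
      next
        assume "k = 2" thus ?thesis using that by (simp add: zc1_def)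
      next
        assume k3: "k \<in> {3..n}"
        hence "k \<noteq> 2" by auto
        thus ?thesis using v[OF k3] z by (simp add: zc1_def)
      qed
    next
      case False
      hence "k \<noteq> 2" using n by auto
      have "zero_cell n k = undefined" unfolding zero_cell_def restrict_apply if_not_P[OF False] ..
      thus ?thesis using ext_i[OF False] \<open>k \<noteq> 2\<close> by (simp add: zc1_def)
    qed
  qed
  show ?thesis using A B by blast
qed

lemma zc1_1: "n \<ge> 3 \<Longrightarrow> zc1 n 1 = 0" by (simp add: zc1_def zero_cell_def)
lemma zc_1: "n \<ge> 3 \<Longrightarrow> zero_cell n 1 = 0" by (simp add: zero_cell_def)

lemma phi_val:
  assumes n: "n \<ge> 3" and i: "i \<in> cells {1..n}" and s: "supp n i"
  shows "phi n i = (if i = zero_cell n then R n - 1 else if i = zc1 n then R n else 0)"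
proof -
  have S: "(\<Sum>T\<in>TT n. chi T i) = (if d0 n i then 2 * R n else 0) - 1 - chi {3..n} i"
    unfolding TT_def by (rule sum_chi_ne2[OF n])
  have i2: "i 2 = 0 \<or> i 2 = 1" using cells_val[OF i, of 2] n by auto
  show ?thesis
  proof (cases "i 1 = 0")
    case False
    hence "i \<noteq> zero_cell n" "i \<noteq> zc1 n" using zc1_1[OF n] zc_1[OF n] by auto
    thus ?thesis using False by (simp add: phi_def)
  next
    case True
    show ?thesis
    proof (cases "d0 n i")
      case d: True
      have p: "chi {3..n} i = 1" by (rule chi_d0[OF d])
      show ?thesis
      proof (cases "i 2 = 0")
        case True
        hence "i = zero_cell n" using cell_id[OF n i \<open>i 1 = 0\<close> d] by blast
        thus ?thesis using True \<open>i 1 = 0\<close> d p S by (simp add: phi_def)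
      next
        case False
        hence i21: "i 2 = 1" using i2 by simp
        hence "i = zc1 n" using cell_id[OF n i \<open>i 1 = 0\<close> d] by blast
        moreover have "(2 * R n - 2) / 2 + 1 = R n" by (simp add: diff_divide_distrib)
        ultimately show ?thesis using i21 \<open>i 1 = 0\<close> d p S zc_ne[OF n] by (simp add: phi_def)
      qed
    next
      case nd: False
      hence ne: "i \<noteq> zero_cell n" "i \<noteq> zc1 n" using d0_zc d0_zc1 by metis+
      have pne: "chi {3..n} i \<noteq> sg i 2" using s nd by (simp add: supp_def)
      have pm: "chi {3..n} i = 1 \<or> chi {3..n} i = -1" by (rule chi_pm) simp
      have "phi n i = 0"
        using i2 pne pm S nd \<open>i 1 = 0\<close> by (auto simp: phi_def sg_def)
      thus ?thesis using ne by simp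
    qed
  qed
qed

lemma phi_sum:
  assumes n: "n \<ge> 3" and off: "\<forall>i\<in>cells {1..n}. \<not> supp n i \<longrightarrow> w i = 0"
  shows "(\<Sum>i\<in>cells {1..n}. phi n i * w i) = (R n - 1) * w (zero_cell n) + R n * w (zc1 n)"
proof -
  have pw: "phi n i * w i = (if i = zero_cell n then (R n - 1) * w i else 0) + (if i = zc1 n then R n * w i else 0)"
    if i: "i \<in> cells {1..n}" for i
  proof (cases "supp n i")
    case True thus ?thesis using phi_val[OF n i True] zc_ne[OF n] by auto
  next
    case False
    hence "i \<noteq> zero_cell n" "i \<noteq> zc1 n" using supp_zc supp_zc1 by metis+
    thus ?thesis using off i False by auto
  qed
  have "(\<Sum>i\<in>cells {1..n}. phi n i * w i) = (\<Sum>i\<in>cells {1..n}. (if i = zero_cell n then (R n - 1) * w i else 0) + (if i = zc1 n then R n * w i else 0))"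
    by (intro sum.cong refl pw)
  also have "\<dots> = (R n - 1) * w (zero_cell n) + R n * w (zc1 n)"
  proof -
    have fin: "finite (cells {1..n})" unfolding cells_def by (intro finite_PiE) auto
    show ?thesis unfolding sum.distrib sum.delta[OF fin] using zc_cells[of n] zc1_cells[OF n] by simp
  qed
  finally show ?thesis .
qed

lemma ut_off: "\<forall>i\<in>cells {1..n}. \<not> supp n i \<longrightarrow> ut n i = 0"
  using supp_zc by (auto simp: ut_def)

lemma ip_bound:
  assumes n: "n \<ge> 3" and nn: "nonneg_table n w" and it: "integral_table n w"
    and eq: "marginals n (Dn n) w = marginals n (Dn n) (ut n)"
  shows "w (zero_cell n) \<ge> R n - 1"
proof -
  have e: "(R n - 1) * w (zero_cell n) + R n * w (zc1 n) = (R n - 1) * (R n - 1) + R n * R n"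
  proof -
    have "(R n - 1) * w (zero_cell n) + R n * w (zc1 n) = (\<Sum>i\<in>cells {1..n}. phi n i * w i)"
      using phi_sum[OF n w_off[OF n nn eq]] by simp
    also have "\<dots> = (\<Sum>i\<in>cells {1..n}. phi n i * ut n i)" by (rule phi_inv[OF n eq])
    also have "\<dots> = (R n - 1) * ut n (zero_cell n) + R n * ut n (zc1 n)"
      by (rule phi_sum[OF n ut_off])
    also have "\<dots> = (R n - 1) * (R n - 1) + R n * R n"
      using zc_ne[OF n] supp_zc1 by (simp add: ut_def)
    finally show ?thesis .
  qed
  have "w (zero_cell n) \<in> \<int>" using it zc_cells[of n] by (simp add: integral_table_def)
  then obtain a where a: "w (zero_cell n) = of_int a" by (auto elim: Ints_cases)
  have "w (zc1 n) \<in> \<int>" using it zc1_cells[OF n] by (simp add: integral_table_def)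
  then obtain b where b: "w (zc1 n) = of_int b" by (auto elim: Ints_cases)
  define Ri :: int where "Ri = 2 ^ (n - 3)"
  have RR: "R n = of_int Ri" by (simp add: R_def Ri_def)
  have Ri1: "Ri \<ge> 1" unfolding Ri_def by simp
  have "(of_int ((Ri - 1) * a + Ri * b) :: real) = of_int ((Ri - 1) * (Ri - 1) + Ri * Ri)"
    using e unfolding a b RR by simp
  hence eqi: "(Ri - 1) * a + Ri * b = (Ri - 1) * (Ri - 1) + Ri * Ri" by (simp only: of_int_eq_iff)
  have k: "a + 1 = Ri * (a + b - 2 * Ri + 2)" using eqi by algebra
  have a0: "a \<ge> 0" using nn zc_cells[of n] a by (auto simp: nonneg_table_def)
  have "a + b - 2 * Ri + 2 \<ge> 1"
  proof (rule ccontr)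
    assume "\<not> ?thesis"
    hence "a + b - 2 * Ri + 2 \<le> 0" by simp
    hence "Ri * (a + b - 2 * Ri + 2) \<le> 0" using Ri1 by (simp add: mult_nonneg_nonpos)
    thus False using k a0 by simp
  qed
  hence "Ri * (a + b - 2 * Ri + 2) \<ge> Ri * 1" using Ri1 by (intro mult_left_mono) auto
  hence "a \<ge> Ri - 1" using k by simp
  hence "(of_int a :: real) \<ge> of_int Ri - 1" by linarith
  thus ?thesis unfolding a RR .
qed

theorem mainTheorem1:
  fixes n :: nat
  assumes "n \<ge> 3"
  shows "\<exists>\<Delta>. simplicial_complex n \<Delta> \<and>
           gap_minus n \<Delta> \<ge> ereal (2 ^ (n - 3) - 1)"
proof (intro exI conjI)
  have n: "n \<ge> 3" by (rule assms)
  let ?D = "Dn n"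
  let ?b = "marginals n ?D (ut n)"
  show "simplicial_complex n ?D" by (rule Dn_sc)
  have feas: "?b \<in> feasible_margins n ?D"
    unfolding feasible_margins_def using ut_nonneg ut_integral by blast
  have IP: "IP_opt n ?D ?b \<ge> R n - 1"
    unfolding IP_opt_def
  proof (rule cInf_greatest)
    show "{u (zero_cell n) |u. marginals n ?D u = ?b \<and> nonneg_table n u \<and> integral_table n u} \<noteq> {}"
      using ut_nonneg ut_integral by blast
  next
    fix x assume "x \<in> {u (zero_cell n) |u. marginals n ?D u = ?b \<and> nonneg_table n u \<and> integral_table n u}"
    then obtain u where "x = u (zero_cell n)" "marginals n ?D u = ?b" "nonneg_table n u" "integral_table n u"
      by blast
    thus "R n - 1 \<le> x" using ip_bound[OF n] by simp
  qed
  have LP: "LP_opt n ?D ?b \<le> 0"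
    unfolding LP_opt_def
  proof -
    have mem: "vt n (zero_cell n) \<in> {u (zero_cell n) |u. marginals n ?D u = ?b \<and> nonneg_table n u}"
      using marg_eq[OF n] vt_nonneg[OF n] by blast
    have bdd: "bdd_below {u (zero_cell n) |u. marginals n ?D u = ?b \<and> nonneg_table n u}"
      by (rule bdd_belowI[of _ 0]) (use zc_cells[of n] in \<open>auto simp: nonneg_table_def\<close>)
    have "Inf {u (zero_cell n) |u. marginals n ?D u = ?b \<and> nonneg_table n u} \<le> vt n (zero_cell n)"
      by (rule cInf_lower[OF mem bdd])
    thus "Inf {u (zero_cell n) |u. marginals n ?D u = ?b \<and> nonneg_table n u} \<le> 0"
      using vt_zc[OF n] by simp
  qed
  have "ereal (2 ^ (n - 3) - 1) \<le> ereal (IP_opt n ?D ?b - LP_opt n ?D ?b)"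
    using IP LP by (simp add: R_def)
  also have "\<dots> \<le> gap_minus n ?D"
    unfolding gap_minus_def by (rule SUP_upper[OF feas])
  finally show "gap_minus n ?D \<ge> ereal (2 ^ (n - 3) - 1)" .
qed


end
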